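(* For all integers $n\ge0$ and $p\ge0$, $$\mathcal{B}_{n,p}=\sum_{k\ge0}\binom{p+k}{k}^{-1}{}_1F_1(k+1;p+k+1;-1)\frac{k^n}{k!},$$ with the convention $0^0=1$.
   Context: ${}_1F_1(a;c;w)=\sum_{n\ge0}\frac{a^{\overline n}}{c^{\overline n}}\frac{w^n}{n!}$ is Kummer's confluent hypergeometric function, where $a^{\overline n}=a(a+1)\cdots(a+n-1)$. For an integer $p\ge0$, the $p$-Bell numbers $\mathcal{B}_{n,p}$ are defined by $\sum_{n\ge0}\mathcal{B}_{n,p}\frac{z^n}{n!}=\sum_{n\ge0}\binom{n+p}{p}^{-1}\frac{(e^z-1)^n}{n!}$. *)

theory Defs
  imports "HOL-Analysis.Analysis" "HOL-Computational_Algebra.Formal_Power_Series"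
begin

definition hyp1F1 :: "real \<Rightarrow> real \<Rightarrow> real \<Rightarrow> real" where
  "hyp1F1 a c w = (\<Sum>n. pochhammer a n / pochhammer c n * w ^ n / fact n)"

text \<open>p-Bell numbers via their exponential generating function
  sum_k binom(k+p,p)^{-1} (e^z-1)^k / k!, taken as a formal power series:
  the n-th coefficient of the (formally convergent) series, times n!.\<close>
definition pBell :: "nat \<Rightarrow> nat \<Rightarrow> real" where
  "pBell n p = fact n *
     (\<Sum>k. fps_nth ((fps_exp (1::real) - 1) ^ k) n / (fact k * real ((k + p) choose p)))"

end

theory Submission
  imports Defs
begin

lemma poch_fact: "fact (a + m) = (fact a :: real) * pochhammer (real a + 1) m"
  by (induction m) (simp_all add: pochhammer_Suc algebra_simps)

lemma key_id:
  "1 / real ((p + k) choose k) * (pochhammer (real k + 1) m / pochhammer (real (p + k) + 1) m)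
     = 1 / real ((p + k + m) choose p)"
proof -
  have e1: "pochhammer (real k + 1) m = fact (k+m) / fact k"
    using poch_fact[of k m] by (simp add: field_simps)
  have e2: "pochhammer (real (p+k) + 1) m = fact (p+k+m) / fact (p+k)"
    using poch_fact[of "p+k" m] by (simp add: field_simps)
  have b1: "real ((p + k) choose k) = fact (p+k) / (fact k * fact p)"
    by (subst binomial_fact) auto
  have b2: "real ((p + k + m) choose p) = fact (p+k+m) / (fact p * fact (k+m))"
    by (subst binomial_fact) (auto simp: add.assoc)
  show ?thesis unfolding e1 e2 b1 b2 by (simp add: field_simps)
qed

lemma pow_le_exp: "real k ^ n / fact n \<le> exp (real k)"
proof -
  have c: "(\<lambda>i. real k ^ i /\<^sub>R fact i) sums exp (real k)" by (rule exp_converges)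
  have "sum (\<lambda>i. real k ^ i /\<^sub>R fact i) {n} \<le> suminf (\<lambda>i. real k ^ i /\<^sub>R fact i)"
    by (rule sum_le_suminf[OF sums_summable[OF c]]) auto
  also have "\<dots> = exp (real k)" using c sums_unique by metis
  finally show ?thesis by (simp add: divide_inverse mult.commute)
qed

lemma summable_a: "summable (\<lambda>k. real k ^ n / fact k)"
proof -
  have s0: "summable (\<lambda>k. inverse (fact k) * (exp 1 :: real) ^ k)" by (rule summable_exp)
  have s: "summable (\<lambda>k. fact n * (inverse (fact k) * (exp 1 :: real) ^ k))"
    by (rule summable_mult[OF s0])
  show ?thesis
  proof (rule summable_comparison_test[OF _ s])
    show "\<exists>N. \<forall>k\<ge>N. norm (real k ^ n / fact k) \<le> fact n * (inverse (fact k) * (exp 1 :: real) ^ k)"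
    proof (intro exI allI impI)
      fix k :: nat
      have "real k ^ n \<le> fact n * exp (real k)" using pow_le_exp[of k n] by (simp add: field_simps)
      also have "exp (real k) = exp 1 ^ k" using exp_of_nat_mult[of k "1::real"] by simp
      finally show "norm (real k ^ n / fact k) \<le> fact n * (inverse (fact k) * (exp 1 :: real) ^ k)"
        by (simp add: field_simps divide_right_mono)
    qed
  qed
qed

lemma summable_invfact: "summable (\<lambda>m. 1 / (fact m :: real))"
  using summable_exp[of "1::real"] by (simp add: divide_inverse)

lemma invfact_has_sum: "((\<lambda>m. 1 / (fact m :: real)) has_sum exp 1) UNIV"
proof (rule norm_summable_imp_has_sum)
  show "summable (\<lambda>m. norm (1 / (fact m :: real)))" using summable_invfact by simp
  show "(\<lambda>m. 1 / (fact m :: real)) sums exp 1"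
    using exp_converges[of "1::real"] by (simp add: divide_inverse mult.commute)
qed

lemma fps_coeff:
  "fps_nth ((fps_exp (1::real) - 1) ^ j) n = (\<Sum>k\<le>j. real (j choose k) * (real k ^ n / fact n) * (-1) ^ (j - k))"
proof -
  have "(fps_exp (1::real) - 1) ^ j = (fps_exp 1 + (-1)) ^ j" by simp
  also have "\<dots> = (\<Sum>k\<le>j. of_nat (j choose k) * fps_exp 1 ^ k * (-1) ^ (j - k))"
    by (rule binomial_ring)
  also have "\<dots> = (\<Sum>k\<le>j. fps_const (real (j choose k) * (-1) ^ (j - k)) * fps_exp (real k))"
    by (intro sum.cong refl) (simp add: fps_exp_power_mult fps_of_nat[symmetric] fps_const_neg[symmetric]
          fps_const_mult[symmetric] fps_const_power[symmetric] del: fps_const_neg fps_const_power fps_const_mult fps_of_nat)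
  finally show ?thesis by (simp add: fps_sum_nth algebra_simps)
qed

theorem mainTheorem20:
  fixes n p :: nat
  shows "(\<lambda>k. 1 / real ((p + k) choose k) * hyp1F1 (real k + 1) (real (p + k) + 1) (-1)
               * real k ^ n / fact k) sums pBell n p"
proof -
  define a where "a k = real k ^ n / fact k" for k
  define b where "b m = (-1) ^ m / (fact m :: real)" for m
  define c where "c j = 1 / real ((p + j) choose p)" for j
  define f where "f = (\<lambda>(k, m). a k * b m * c (k + m))"
  define g where "g = (\<lambda>(k, m). a k * (1 / (fact m :: real)))"
  have a_nn: "a k \<ge> 0" for k by (simp add: a_def)
  have c_bd: "0 \<le> c j" "c j \<le> 1" for j
  proof -
    have h: "0 < (p + j) choose p" by (simp add: zero_less_binomial)
    hence "1 \<le> (p + j) choose p" by linarith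
    hence "real ((p + j) choose p) \<ge> 1" by simp
    thus "0 \<le> c j" "c j \<le> 1" by (auto simp: c_def)
  qed
  have g_sum: "g summable_on UNIV \<times> UNIV"
  proof (rule summable_on_SigmaI[where g = "\<lambda>k. a k * exp 1"])
    show "((\<lambda>m. g (k, m)) has_sum a k * exp 1) UNIV" for k
      unfolding g_def using has_sum_cmult_right[OF invfact_has_sum, of "a k"] by simp
    show "(\<lambda>k. a k * exp 1) summable_on UNIV"
    proof (rule summable_nonneg_imp_summable_on)
      show "summable (\<lambda>k. a k * exp 1)" unfolding a_def by (rule summable_mult2[OF summable_a])
      show "0 \<le> a k * exp 1" for k using a_nn[of k] by simp
    qed
    show "g (k, m) \<ge> 0" for k m by (simp add: g_def a_nn)
  qed
  have g_abs: "(\<lambda>x. norm (g x)) summable_on UNIV \<times> UNIV"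
    using g_sum by (rule summable_on_cong[THEN iffD1, rotated]) (auto simp: g_def a_nn)
  have f_bd: "norm (f x) \<le> norm (g x)" for x
  proof -
    obtain k m where x: "x = (k, m)" by (cases x)
    have "\<bar>b m\<bar> = 1 / fact m" by (simp add: b_def abs_mult)
    hence "\<bar>a k * b m * c (k + m)\<bar> \<le> a k * (1 / fact m) * 1"
      using a_nn[of k] c_bd[of "k+m"] by (simp add: abs_mult mult_mono divide_right_mono mult_left_le)
    thus ?thesis by (simp add: x f_def g_def a_nn)
  qed
  have f_abs: "(\<lambda>x. norm (f x)) summable_on UNIV \<times> UNIV"
    by (rule Infinite_Sum.abs_summable_on_comparison_test[OF g_abs]) (rule f_bd)
  have f_sum: "f summable_on UNIV \<times> UNIV"
    by (rule abs_summable_summable[OF f_abs])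
  then obtain S where S: "(f has_sum S) (UNIV \<times> UNIV)" by (auto simp: summable_on_def)
  define T where "T k = 1 / real ((p + k) choose k) * hyp1F1 (real k + 1) (real (p + k) + 1) (-1)
               * real k ^ n / fact k" for k
  have inner: "((\<lambda>m. f (k, m)) has_sum T k) UNIV" for k
  proof -
    define h where "h m = pochhammer (real k + 1) m / pochhammer (real (p + k) + 1) m * (-1) ^ m / fact m" for m
    define K where "K = real ((p + k) choose k)"
    have K0: "K > 0" by (simp add: K_def)
    have hK: "h m = K * (b m * c (k + m))" for m
      using key_id[of p k m] K0 unfolding h_def b_def c_def K_def
      by (simp add: field_simps add.assoc)
    have hn: "summable (\<lambda>m. norm (h m))"
    proof (rule summable_comparison_test[where g = "\<lambda>m. K * (1 / fact m)"])
      show "summable (\<lambda>m. K * (1 / fact m))" by (rule summable_mult[OF summable_invfact])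
      show "\<exists>N. \<forall>m\<ge>N. norm (norm (h m)) \<le> K * (1 / fact m)"
      proof (intro exI allI impI)
        fix m :: nat
        have "\<bar>b m\<bar> = 1 / fact m" by (simp add: b_def abs_mult)
        moreover have "K * c (k + m) \<le> K" using K0 c_bd[of "k+m"] by (simp add: mult_left_le)
        hence "K * c (k + m) / fact m \<le> K / fact m" by (simp add: divide_right_mono)
        ultimately show "norm (norm (h m)) \<le> K * (1 / fact m)"
          unfolding hK using K0 c_bd[of "k+m"]
          by (simp add: abs_mult)
      qed
    qed
    have hs: "h sums hyp1F1 (real k + 1) (real (p + k) + 1) (-1)"
      unfolding hyp1F1_def h_def[symmetric]
      using summable_norm_cancel[OF hn] by (rule summable_sums)
    have feq: "f (k, m) = (a k / K) * h m" for m
      using K0 by (simp add: f_def hK)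
    have "((\<lambda>m. (a k / K) * h m) has_sum ((a k / K) * hyp1F1 (real k + 1) (real (p + k) + 1) (-1))) UNIV"
    proof (rule norm_summable_imp_has_sum)
      show "summable (\<lambda>m. norm (a k / K * h m))"
        using summable_mult[OF hn, of "\<bar>a k / K\<bar>"] by (simp add: abs_mult)
      show "(\<lambda>m. a k / K * h m) sums (a k / K * hyp1F1 (real k + 1) (real (p + k) + 1) (- 1))"
        by (rule sums_mult[OF hs])
    qed
    moreover have "a k / K * hyp1F1 (real k + 1) (real (p + k) + 1) (-1) = T k"
      by (simp add: T_def a_def K_def mult.commute)
    ultimately show ?thesis by (simp add: feq)
  qed
  have T_S: "(T has_sum S) UNIV"
    by (rule has_sum_SigmaD[OF S]) (use inner in auto)
  define \<phi> where "\<phi> = (\<lambda>(j::nat, k::nat). (k, j - k))"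
  have bij: "bij_betw \<phi> (SIGMA j:UNIV. {..j}) (UNIV \<times> UNIV)"
  proof (rule bij_betwI[where g = "\<lambda>(k::nat, m::nat). (k + m, k)"])
    show "\<phi> \<in> (SIGMA j:UNIV. {..j}) \<rightarrow> UNIV \<times> UNIV" by auto
    show "(\<lambda>(k::nat, m::nat). (k + m, k)) \<in> UNIV \<times> UNIV \<rightarrow> (SIGMA j:UNIV. {..j})" by auto
    show "(\<lambda>(k::nat, m::nat). (k + m, k)) (\<phi> x) = x" if "x \<in> (SIGMA j:UNIV. {..j})" for x
      using that by (auto simp: \<phi>_def)
    show "\<phi> ((\<lambda>(k::nat, m::nat). (k + m, k)) y) = y" for y
      by (auto simp: \<phi>_def split: prod.splits)
  qed
  have S2: "((\<lambda>x. f (\<phi> x)) has_sum S) (SIGMA j:UNIV. {..j})"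
    by (rule has_sum_reindex_bij_betw[OF bij, THEN iffD2]) (rule S)
  define U where "U j = (\<Sum>k\<le>j. f (k, j - k))" for j
  have U_S: "(U has_sum S) UNIV"
    by (rule has_sum_SigmaD[OF S2]) (auto simp: U_def \<phi>_def)
  have U_eq: "U j = fact n * (fps_nth ((fps_exp (1::real) - 1) ^ j) n / (fact j * real ((j + p) choose p)))" for j
  proof -
    have "U j = c j * (\<Sum>k\<le>j. a k * b (j - k))"
      by (simp add: U_def f_def sum_distrib_left algebra_simps)
    also have "(\<Sum>k\<le>j. a k * b (j - k)) = (\<Sum>k\<le>j. real (j choose k) * (real k ^ n) * (-1) ^ (j - k)) / fact j"
      unfolding sum_divide_distrib
    proof (intro sum.cong refl)
      fix k assume "k \<in> {..j}"
      hence kj: "k \<le> j" by simp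
      show "a k * b (j - k) = real (j choose k) * real k ^ n * (- 1) ^ (j - k) / fact j"
        by (simp add: a_def b_def binomial_fact[OF kj])
    qed
    also have "(\<Sum>k\<le>j. real (j choose k) * (real k ^ n) * (-1) ^ (j - k))
        = fact n * fps_nth ((fps_exp (1::real) - 1) ^ j) n"
      by (simp add: fps_coeff sum_distrib_left)
    finally show ?thesis by (simp add: c_def add.commute)
  qed
  have "U sums S" by (rule has_sum_imp_sums[OF U_S])
  hence "(\<lambda>j. fps_nth ((fps_exp (1::real) - 1) ^ j) n / (fact j * real ((j + p) choose p))) sums (S / fact n)"
    using sums_divide[of U S "fact n"] by (simp add: U_eq)
  hence "pBell n p = S" by (simp add: pBell_def sums_iff)
  moreover have "T sums S" by (rule has_sum_imp_sums[OF T_S])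
  ultimately show ?thesis by (simp add: T_def [abs_def])
qed

end
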